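(* Let $R=R_{K\times L,(x_0,y_0)}$ be a rectangle and let $f:\Omega\to\mathbb{R}$ be an $R$-local function. Then $\mu^{\mathrm{per}}_{\Lambda,\lambda}(f\cdot\tau f)\ge0$ in each of the two cases: (a) $\Lambda=R_{2K\times L}$ and $\tau$ is the reflection of $\mathbb{R}^2$ through the vertical line $x=x_0+K$; (b) $\Lambda=R_{K\times2L}$ and $\tau$ is the reflection through the horizontal line $y=y_0+L$. Here $(\tau f)(\sigma)=f(\sigma\circ\tau)$, with $\tau$ restricted to $\mathbb{Z}^2$.
   Context: Tiles: $T_{(x,y)}=[x-1,x+1]\times[y-1,y+1]$; $\Omega=\{\sigma\in\{0,1\}^{\mathbb{Z}^2}: \sigma(u)=\sigma(v)=1,u\ne v\Rightarrow\mathrm{int}(T_u)\cap\mathrm{int}(T_v)=\emptyset\}$. A rectangle is a closed axis-parallel rectangle with integer corners; $R_{K\times L,(x,y)}=[x,x+K]\times[y,y+L]$, $R_{K\times L}=R_{K\times L,(0,0)}$. A face is a unit square with integer corners, vacant in $\sigma$ if contained in no tile of $\sigma$. For a rectangle $\Lambda$ and $\lambda>0$: $w_{\Lambda,\lambda}(\sigma)=\lambda^{-\frac14\#\{\text{vacant faces }\subset\Lambda\}}$; $\Omega^{\mathrm{per}}_\Lambda$ is the set of $\sigma\in\Omega$ periodic with periods $(\mathrm{Width}(\Lambda),0)$ and $(0,\mathrm{Height}(\Lambda))$; $\mu^{\mathrm{per}}_{\Lambda,\lambda}(\sigma)=w_{\Lambda,\lambda}(\sigma)/\sum_{\sigma'\in\Omega^{\mathrm{per}}_\Lambda}w_{\Lambda,\lambda}(\sigma')$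 on $\Omega^{\mathrm{per}}_\Lambda$. A function $f$ on $\Omega$ is $R$-local if $f(\sigma)$ depends only on $\sigma$ restricted to $R\cap\mathbb{Z}^2$ ($R$ closed). *)

theory Defs
  imports "HOL-Analysis.Analysis"
begin

type_synonym config = "int \<times> int \<Rightarrow> bool"

definition tile :: "int \<times> int \<Rightarrow> (real \<times> real) set" where
  "tile u = {real_of_int (fst u) - 1 .. real_of_int (fst u) + 1}
          \<times> {real_of_int (snd u) - 1 .. real_of_int (snd u) + 1}"

definition Omega :: "config set" where
  "Omega = {\<sigma>. \<forall>u v. \<sigma> u \<and> \<sigma> v \<and> u \<noteq> v \<longrightarrow> interior (tile u) \<inter> interior (tile v) = {}}"

definition rect :: "int \<Rightarrow> int \<Rightarrow> int \<Rightarrow> int \<Rightarrow> (real \<times> real) set" where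
  "rect K L x y = {real_of_int x .. real_of_int (x + K)} \<times> {real_of_int y .. real_of_int (y + L)}"

definition face :: "int \<times> int \<Rightarrow> (real \<times> real) set" where
  "face p = {real_of_int (fst p) .. real_of_int (fst p) + 1}
          \<times> {real_of_int (snd p) .. real_of_int (snd p) + 1}"

definition vacant :: "config \<Rightarrow> int \<times> int \<Rightarrow> bool" where
  "vacant \<sigma> p \<longleftrightarrow> \<not> (\<exists>u. \<sigma> u \<and> face p \<subseteq> tile u)"

definition n_vacant :: "(real \<times> real) set \<Rightarrow> config \<Rightarrow> nat" where
  "n_vacant Lam \<sigma> = card {p. face p \<subseteq> Lam \<and> vacant \<sigma> p}"

definition weight :: "(real \<times> real) set \<Rightarrow> real \<Rightarrow> config \<Rightarrow> real" where
  "weight Lam lam \<sigma> = lam powr (- (real (n_vacant Lam \<sigma>) / 4))"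

definition Omega_per :: "int \<Rightarrow> int \<Rightarrow> config set" where
  "Omega_per W H = {\<sigma> \<in> Omega. \<forall>a b. \<sigma> (a + W, b) = \<sigma> (a, b) \<and> \<sigma> (a, b + H) = \<sigma> (a, b)}"

definition mu_per :: "int \<Rightarrow> int \<Rightarrow> int \<Rightarrow> int \<Rightarrow> real \<Rightarrow> (config \<Rightarrow> real) \<Rightarrow> real" where
  "mu_per K L x y lam g =
     (\<Sum>\<sigma>\<in>Omega_per K L. weight (rect K L x y) lam \<sigma> * g \<sigma>)
     / (\<Sum>\<sigma>\<in>Omega_per K L. weight (rect K L x y) lam \<sigma>)"

definition is_local :: "(real \<times> real) set \<Rightarrow> (config \<Rightarrow> real) \<Rightarrow> bool" where
  "is_local R f \<longleftrightarrow> (\<forall>\<sigma>\<in>Omega. \<forall>\<sigma>'\<in>Omega.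
      (\<forall>a b. (real_of_int a, real_of_int b) \<in> R \<longrightarrow> \<sigma> (a, b) = \<sigma>' (a, b)) \<longrightarrow> f \<sigma> = f \<sigma>')"

definition reflV :: "int \<Rightarrow> int \<times> int \<Rightarrow> int \<times> int" where
  "reflV c p = (2 * c - fst p, snd p)"

definition reflH :: "int \<Rightarrow> int \<times> int \<Rightarrow> int \<times> int" where
  "reflH c p = (fst p, 2 * c - snd p)"

end

theory Submission
  imports Defs
begin


lemma ivl_disj:
  fixes a c :: int
  shows "({real_of_int a - 1<..<real_of_int a + 1} \<inter> {real_of_int c - 1<..<real_of_int c + 1} = {}) \<longleftrightarrow> 2 \<le> \<bar>a - c\<bar>"
proof
  assume h: "{real_of_int a - 1<..<real_of_int a + 1} \<inter> {real_of_int c - 1<..<real_of_int c + 1} = {}"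
  show "2 \<le> \<bar>a - c\<bar>"
  proof (rule ccontr)
    assume n: "\<not> 2 \<le> \<bar>a - c\<bar>"
    have h1: "a - c < 2" and h2: "c - a < 2" using n by linarith+
    have "real_of_int (a - c) < real_of_int 2" using h1 by (simp only: of_int_less_iff)
    then have r1: "real_of_int a - real_of_int c < 2" by simp
    have "real_of_int (c - a) < real_of_int 2" using h2 by (simp only: of_int_less_iff)
    then have r2: "real_of_int c - real_of_int a < 2" by simp
    have "(real_of_int a + real_of_int c)/2 \<in> {real_of_int a - 1<..<real_of_int a + 1} \<inter> {real_of_int c - 1<..<real_of_int c + 1}"
      using r1 r2 by (simp add: field_simps max_def)
    with h show False by simp
  qed
next
  assume "2 \<le> \<bar>a - c\<bar>"
  then have "2 \<le> a - c \<or> 2 \<le> c - a" by linarith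
  then have "real_of_int 2 \<le> real_of_int (a - c) \<or> real_of_int 2 \<le> real_of_int (c - a)"
    by (simp only: of_int_le_iff)
  then have "2 \<le> real_of_int a - real_of_int c \<or> 2 \<le> real_of_int c - real_of_int a" by simp
  then show "{real_of_int a - 1<..<real_of_int a + 1} \<inter> {real_of_int c - 1<..<real_of_int c + 1} = {}"
    by auto
qed

lemma tile_disj:
  "interior (tile u) \<inter> interior (tile v) = {} \<longleftrightarrow> 2 \<le> \<bar>fst u - fst v\<bar> \<or> 2 \<le> \<bar>snd u - snd v\<bar>"
  by (simp only: tile_def interior_Times interior_atLeastAtMost_real Times_Int_Times Times_empty ivl_disj)

definition adm :: "config \<Rightarrow> bool" where
  "adm \<sigma> \<longleftrightarrow> (\<forall>u v. \<sigma> u \<and> \<sigma> v \<and> u \<noteq> v \<longrightarrow> 2 \<le> \<bar>fst u - fst v\<bar> \<or> 2 \<le> \<bar>snd u - snd v\<bar>)"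

lemma Omega_iff: "\<sigma> \<in> Omega \<longleftrightarrow> adm \<sigma>"
  unfolding Omega_def adm_def by (simp add: tile_disj)

lemma ivl_sub:
  fixes i a :: int
  shows "{real_of_int i .. real_of_int i + 1} \<subseteq> {real_of_int a - 1 .. real_of_int a + 1} \<longleftrightarrow> (a = i \<or> a = i + 1)"
proof -
  have "{real_of_int i .. real_of_int i + 1} \<subseteq> {real_of_int a - 1 .. real_of_int a + 1} \<longleftrightarrow>
        real_of_int a - 1 \<le> real_of_int i \<and> real_of_int i + 1 \<le> real_of_int a + 1" by auto
  also have "\<dots> \<longleftrightarrow> a - 1 \<le> i \<and> i \<le> a" by linarith
  also have "\<dots> \<longleftrightarrow> (a = i \<or> a = i + 1)" by auto
  finally show ?thesis .
qed

lemma face_sub_tile: "face p \<subseteq> tile u \<longleftrightarrow> (fst u = fst p \<or> fst u = fst p + 1) \<and> (snd u = snd p \<or> snd u = snd p + 1)"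
proof -
  have ne: "{real_of_int i .. real_of_int i + 1} \<noteq> {}" for i :: int by simp
  show ?thesis unfolding face_def tile_def times_subset_iff
    using ne ivl_sub by blast
qed

definition vac :: "config \<Rightarrow> int \<times> int \<Rightarrow> bool" where
  "vac \<sigma> p \<longleftrightarrow> \<not> \<sigma> (fst p, snd p) \<and> \<not> \<sigma> (fst p + 1, snd p) \<and> \<not> \<sigma> (fst p, snd p + 1) \<and> \<not> \<sigma> (fst p + 1, snd p + 1)"

lemma vacant_iff: "vacant \<sigma> p \<longleftrightarrow> vac \<sigma> p"
  unfolding vacant_def vac_def face_sub_tile
  by (cases p) (auto simp: split_paired_Ex)

lemma face_sub_rect: "face p \<subseteq> rect W H 0 0 \<longleftrightarrow> 0 \<le> fst p \<and> fst p < W \<and> 0 \<le> snd p \<and> snd p < H"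
proof -
  have "face p \<subseteq> rect W H 0 0 \<longleftrightarrow> (0 \<le> real_of_int (fst p) \<and> real_of_int (fst p) + 1 \<le> real_of_int W)
     \<and> (0 \<le> real_of_int (snd p) \<and> real_of_int (snd p) + 1 \<le> real_of_int H)"
    unfolding face_def rect_def
    by (simp add: times_subset_iff)
  also have "\<dots> \<longleftrightarrow> 0 \<le> fst p \<and> fst p < W \<and> 0 \<le> snd p \<and> snd p < H" by linarith
  finally show ?thesis .
qed

lemma n_vacant_eq: "n_vacant (rect W H 0 0) \<sigma> = card {p. (0 \<le> fst p \<and> fst p < W \<and> 0 \<le> snd p \<and> snd p < H) \<and> vac \<sigma> p}"
  unfolding n_vacant_def face_sub_rect vacant_iff ..



lemma mod_eqI: "0 \<le> r \<Longrightarrow> r < m \<Longrightarrow> m dvd (a - r) \<Longrightarrow> a mod m = (r::int)"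
  by (metis mod_eq_dvd_iff mod_pos_pos_trivial)

definition per :: "int \<Rightarrow> int \<Rightarrow> config \<Rightarrow> bool" where
  "per W H \<sigma> \<longleftrightarrow> (\<forall>a b. \<sigma> (a + W, b) = \<sigma> (a, b) \<and> \<sigma> (a, b + H) = \<sigma> (a, b))"

lemma Omega_per_iff: "\<sigma> \<in> Omega_per W H \<longleftrightarrow> adm \<sigma> \<and> per W H \<sigma>"
  unfolding Omega_per_def per_def Omega_iff by auto

lemma per_x_k:
  assumes "per W H \<sigma>" shows "\<sigma> (a + k * W, b) = \<sigma> (a, b)"
proof (induct k rule: int_induct[where k=0])
  case base then show ?case by simp
next
  case (step1 i)
  have "\<sigma> (a + (i + 1) * W, b) = \<sigma> ((a + i * W) + W, b)" by (simp add: algebra_simps)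
  also have "\<dots> = \<sigma> (a + i * W, b)" using assms unfolding per_def by blast
  finally show ?case using step1 by simp
next
  case (step2 i)
  have "\<sigma> (a + i * W, b) = \<sigma> ((a + (i - 1) * W) + W, b)" by (simp add: algebra_simps)
  also have "\<dots> = \<sigma> (a + (i - 1) * W, b)" using assms unfolding per_def by blast
  finally show ?case using step2 by simp
qed

lemma per_y_k:
  assumes "per W H \<sigma>" shows "\<sigma> (a, b + k * H) = \<sigma> (a, b)"
proof (induct k rule: int_induct[where k=0])
  case base then show ?case by simp
next
  case (step1 i)
  have "\<sigma> (a, b + (i + 1) * H) = \<sigma> (a, (b + i * H) + H)" by (simp add: algebra_simps)
  also have "\<dots> = \<sigma> (a, b + i * H)" using assms unfolding per_def by blast
  finally show ?case using step1 by simp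
next
  case (step2 i)
  have "\<sigma> (a, b + i * H) = \<sigma> (a, (b + (i - 1) * H) + H)" by (simp add: algebra_simps)
  also have "\<dots> = \<sigma> (a, b + (i - 1) * H)" using assms unfolding per_def by blast
  finally show ?case using step2 by simp
qed

lemma per_x_dvd:
  assumes "per W H \<sigma>" "W dvd (a - a')" shows "\<sigma> (a, b) = \<sigma> (a', b)"
proof -
  obtain k where "a - a' = W * k" using assms(2) by (auto simp: dvd_def)
  then have "a = a' + k * W" by (simp add: algebra_simps)
  then show ?thesis using per_x_k[OF assms(1)] by simp
qed

lemma per_y_dvd:
  assumes "per W H \<sigma>" "H dvd (b - b')" shows "\<sigma> (a, b) = \<sigma> (a, b')"
proof -
  obtain k where "b - b' = H * k" using assms(2) by (auto simp: dvd_def)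
  then have "b = b' + k * H" by (simp add: algebra_simps)
  then show ?thesis using per_y_k[OF assms(1)] by simp
qed

lemma per_mod:
  assumes "per W H \<sigma>" shows "\<sigma> p = \<sigma> (fst p mod W, snd p mod H)"
proof -
  have "\<sigma> (fst p, snd p) = \<sigma> (fst p mod W, snd p)"
    by (rule per_x_dvd[OF assms]) (simp add: mod_eq_dvd_iff[symmetric])
  also have "\<dots> = \<sigma> (fst p mod W, snd p mod H)"
    by (rule per_y_dvd[OF assms]) (simp add: mod_eq_dvd_iff[symmetric])
  finally show ?thesis by simp
qed

lemma finite_Omega_per:
  assumes "W > 0" "H > 0" shows "finite (Omega_per W H)"
proof -
  define B where "B = {0..<W} \<times> {0..<H}"
  have "Omega_per W H \<subseteq> (\<lambda>A. \<lambda>p. (fst p mod W, snd p mod H) \<in> A) ` Pow B"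
  proof
    fix \<sigma> assume "\<sigma> \<in> Omega_per W H"
    then have per: "per W H \<sigma>" by (simp add: Omega_per_iff)
    have "\<sigma> = (\<lambda>p. (fst p mod W, snd p mod H) \<in> {q\<in>B. \<sigma> q})"
    proof
      fix p
      have "(fst p mod W, snd p mod H) \<in> B" using assms unfolding B_def by auto
      then show "\<sigma> p = ((fst p mod W, snd p mod H) \<in> {q\<in>B. \<sigma> q})"
        using per_mod[OF per, of p] by auto
    qed
    then show "\<sigma> \<in> (\<lambda>A. \<lambda>p. (fst p mod W, snd p mod H) \<in> A) ` Pow B" by blast
  qed
  moreover have "finite B" unfolding B_def by simp
  ultimately show ?thesis by (meson finite_Pow_iff finite_imageI finite_subset)
qed

lemma rp_abstract:
  fixes S :: "'s set" and l :: "'s \<Rightarrow> 'a" and \<tau> :: "'s \<Rightarrow> 's" and bd :: "'a \<Rightarrow> 'b" and G :: "'a \<Rightarrow> real"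
  assumes fin: "finite S"
    and inj: "inj_on (\<lambda>\<sigma>. (l \<sigma>, l (\<tau> \<sigma>))) S"
    and img: "(\<lambda>\<sigma>. (l \<sigma>, l (\<tau> \<sigma>))) ` S = {(a, b). a \<in> l ` S \<and> b \<in> l ` S \<and> bd a = bd b}"
  shows "0 \<le> (\<Sum>\<sigma>\<in>S. G (l \<sigma>) * G (l (\<tau> \<sigma>)))"
proof -
  define A where "A = l ` S"
  have finA: "finite A" unfolding A_def using fin by simp
  define C where "C = (SIGMA a:A. {b\<in>A. bd b = bd a})"
  have imgC: "(\<lambda>\<sigma>. (l \<sigma>, l (\<tau> \<sigma>))) ` S = C" unfolding img C_def A_def by auto
  have "(\<Sum>\<sigma>\<in>S. G (l \<sigma>) * G (l (\<tau> \<sigma>))) = (\<Sum>(a, b)\<in>C. G a * G b)"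
    using sum.reindex[OF inj, of "\<lambda>(a, b). G a * G b"] imgC by (simp add: o_def)
  also have "\<dots> = (\<Sum>a\<in>A. \<Sum>b\<in>{b\<in>A. bd b = bd a}. G a * G b)"
    unfolding C_def by (rule sum.Sigma[symmetric]) (use finA in auto)
  also have "\<dots> = (\<Sum>a\<in>A. G a * (\<Sum>b\<in>{b\<in>A. bd b = bd a}. G b))"
    by (simp add: sum_distrib_left)
  also have "\<dots> = (\<Sum>\<eta>\<in>bd ` A. \<Sum>a\<in>{a. a \<in> A \<and> bd a = \<eta>}. G a * (\<Sum>b\<in>{b\<in>A. bd b = bd a}. G b))"
    by (rule sum.group[symmetric]) (use finA in auto)
  also have "\<dots> = (\<Sum>\<eta>\<in>bd ` A. (\<Sum>a\<in>{a. a \<in> A \<and> bd a = \<eta>}. G a) * (\<Sum>b\<in>{b\<in>A. bd b = \<eta>}. G b))"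
    by (simp add: sum_distrib_right)
  also have "\<dots> \<ge> 0"
    by (rule sum_nonneg) (simp add: Collect_conj_eq)
  finally show ?thesis .
qed



lemma dvd_eq1: "W dvd Y \<Longrightarrow> X = W - Y \<Longrightarrow> W dvd (X::int)" by simp
lemma dvd_eq2: "W dvd Y \<Longrightarrow> X = - Y \<Longrightarrow> W dvd (X::int)" by simp
lemma dvd_eq3: "W dvd Y \<Longrightarrow> X = Y \<Longrightarrow> W dvd (X::int)" by simp
lemma dvd_eq4: "W dvd Y \<Longrightarrow> X = W - 2 * Y \<Longrightarrow> W dvd (X::int)" by simp
lemma dvd_eq5: "W dvd Y \<Longrightarrow> X = - (2 * Y) \<Longrightarrow> W dvd (X::int)" by simp
lemma dvd_eq6: "W dvd Y \<Longrightarrow> W dvd Z \<Longrightarrow> X = Y - Z \<Longrightarrow> W dvd (X::int)" by simp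

lemma caseA:
  fixes K L x0 y0 :: int and lam :: real and f :: "config \<Rightarrow> real"
  assumes K: "K > 0" and L: "L > 0" and loc: "is_local (rect K L x0 y0) f"
  shows "0 \<le> (\<Sum>\<sigma>\<in>Omega_per (2*K) L. weight (rect (2*K) L 0 0) lam \<sigma> * (f \<sigma> * f (\<sigma> \<circ> reflV (x0 + K))))"
proof -
  define W where "W = 2*K"
  define c where "c = x0 + K"
  define S where "S = Omega_per W L"
  define rx :: "int \<Rightarrow> int" where "rx a = (a - x0) mod W" for a
  define rr :: "int\<times>int \<Rightarrow> int" where "rr p = rx (fst p)" for p
  define rf where "rf = reflV c"
  define \<tau> :: "config \<Rightarrow> config" where "\<tau> \<sigma> = \<sigma> \<circ> rf" for \<sigma>
  define l :: "config \<Rightarrow> config" where "l \<sigma> = (\<lambda>p. if rr p \<le> K then \<sigma> p else False)" for \<sigma>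
  define bd :: "config \<Rightarrow> config" where "bd a = (\<lambda>p. if rr p = 0 \<or> rr p = K then a p else False)" for a
  define box where "box p \<longleftrightarrow> 0 \<le> fst p \<and> fst p < W \<and> 0 \<le> snd p \<and> snd p < L" for p :: "int\<times>int"
  define VL where "VL a = card {p. box p \<and> rr p < K \<and> vac a p}" for a
  define F where "F a = f (SOME \<sigma>. \<sigma> \<in> S \<and> l \<sigma> = a)" for a
  define G where "G a = lam powr (- (real (VL a) / 4)) * F a" for a

  have W: "W > 0" using K unfolding W_def by simp
  have rx_bnd: "0 \<le> rx a" "rx a < W" for a unfolding rx_def using W by simp_all
  have rx_dvd: "W dvd ((a - x0) - rx a)" for a unfolding rx_def by simp
  have rf_simp: "rf p = (2*c - fst p, snd p)" for p unfolding rf_def reflV_def by simp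
  have rf_rf: "rf (rf p) = p" for p unfolding rf_simp by simp
  have rx_rf0: "rx (2*c - a) = rx a" if "rx a = 0 \<or> rx a = K" for a
  proof (rule mod_eqI[of "rx a" W "2*c - a - x0", folded rx_def])
    show "0 \<le> rx a" "rx a < W" by (rule rx_bnd)+
    show "W dvd 2 * c - a - x0 - rx a"
    proof (cases "rx a = 0")
      case True
      show ?thesis by (rule dvd_eq1[OF rx_dvd[of a]]) (use True in \<open>simp add: W_def c_def\<close>)
    next
      case False
      then have "rx a = K" using that by simp
      then show ?thesis by (intro dvd_eq2[OF rx_dvd[of a]]) (simp add: c_def)
    qed
  qed
  have rx_rf: "rx (2*c - a) = W - rx a" if "rx a \<noteq> 0" for a
  proof (rule mod_eqI[of "W - rx a" W "2*c - a - x0", folded rx_def])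
    show "0 \<le> W - rx a" using rx_bnd[of a] by simp
    show "W - rx a < W" using rx_bnd[of a] that by simp
    show "W dvd 2 * c - a - x0 - (W - rx a)" by (rule dvd_eq2[OF rx_dvd[of a]]) (simp add: W_def c_def)
  qed
  have rx_succ: "rx (a + 1) = rx a + 1" if "rx a < K" for a
  proof (rule mod_eqI[of "rx a + 1" W "a + 1 - x0", folded rx_def])
    show "0 \<le> rx a + 1" using rx_bnd[of a] by simp
    show "rx a + 1 < W" using that K unfolding W_def by simp
    show "W dvd a + 1 - x0 - (rx a + 1)" by (rule dvd_eq3[OF rx_dvd[of a]]) simp
  qed
  have rx_near: "rx b \<le> K" if "0 < rx a" "rx a < K" "\<bar>b - a\<bar> \<le> 1" for a b
  proof -
    have "rx b = rx a + (b - a)"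
    proof (rule mod_eqI[of "rx a + (b - a)" W "b - x0", folded rx_def])
      show "0 \<le> rx a + (b - a)" using that by simp
      show "rx a + (b - a) < W" using that K unfolding W_def by simp
      show "W dvd b - x0 - (rx a + (b - a))" by (rule dvd_eq3[OF rx_dvd[of a]]) simp
    qed
    then show ?thesis using that by simp
  qed
  have rx_W: "rx (a + W) = rx a" for a
    unfolding rx_def by (simp add: mod_eq_dvd_iff)
  have rx_mW: "rx (a - W) = rx a" for a
    unfolding rx_def by (simp add: mod_eq_dvd_iff)

  have S_iff: "\<sigma> \<in> S \<longleftrightarrow> adm \<sigma> \<and> per W L \<sigma>" for \<sigma> unfolding S_def by (rule Omega_per_iff)
  have per_rf: "\<sigma> (rf p) = \<sigma> p" if "per W L \<sigma>" "rx (fst p) = 0 \<or> rx (fst p) = K" for \<sigma> p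
  proof -
    obtain a b where p: "p = (a, b)" by (cases p)
    have "W dvd (2*c - a - a)"
    proof (cases "rx a = 0")
      case True
      show ?thesis by (rule dvd_eq4[OF rx_dvd[of a]]) (use True in \<open>simp add: W_def c_def\<close>)
    next
      case False
      then have "rx a = K" using that p by simp
      then show ?thesis by (intro dvd_eq5[OF rx_dvd[of a]]) (simp add: c_def)
    qed
    then show ?thesis using per_x_dvd[OF that(1)] p rf_simp by simp
  qed
  have rf_neq: "rf u \<noteq> rf v" if "u \<noteq> v" for u v using that rf_rf by metis
  have rf_dist: "\<bar>fst (rf u) - fst (rf v)\<bar> = \<bar>fst u - fst v\<bar>" "\<bar>snd (rf u) - snd (rf v)\<bar> = \<bar>snd u - snd v\<bar>" for u v
    unfolding rf_simp by simp_all
  have per_rf_shift: "per W L (\<lambda>p. \<sigma> (rf p))" if "per W L \<sigma>" for \<sigma>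
    unfolding per_def
  proof (intro allI conjI)
    fix a b
    show "\<sigma> (rf (a + W, b)) = \<sigma> (rf (a, b))"
      unfolding rf_simp using per_x_dvd[OF that, of "2*c - (a+W)" "2*c - a" b] by simp
    show "\<sigma> (rf (a, b + L)) = \<sigma> (rf (a, b))"
      unfolding rf_simp using that unfolding per_def by simp
  qed
  have adm_rf: "adm (\<lambda>p. \<sigma> (rf p))" if "adm \<sigma>" for \<sigma>
    unfolding adm_def
  proof (intro allI impI)
    fix u v assume h: "\<sigma> (rf u) \<and> \<sigma> (rf v) \<and> u \<noteq> v"
    then have "2 \<le> \<bar>fst (rf u) - fst (rf v)\<bar> \<or> 2 \<le> \<bar>snd (rf u) - snd (rf v)\<bar>"
      using that rf_neq unfolding adm_def by blast
    then show "2 \<le> \<bar>fst u - fst v\<bar> \<or> 2 \<le> \<bar>snd u - snd v\<bar>" by (simp add: rf_dist)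
  qed
  have \<tau>S: "\<tau> \<sigma> \<in> S" if "\<sigma> \<in> S" for \<sigma>
    using that adm_rf per_rf_shift unfolding S_iff \<tau>_def o_def by blast

  have fin: "finite S" unfolding S_def using finite_Omega_per W L by blast

  have inj: "inj_on (\<lambda>\<sigma>. (l \<sigma>, l (\<tau> \<sigma>))) S"
  proof (rule inj_onI)
    fix \<sigma>1 \<sigma>2 assume "\<sigma>1 \<in> S" "\<sigma>2 \<in> S" and eq: "(l \<sigma>1, l (\<tau> \<sigma>1)) = (l \<sigma>2, l (\<tau> \<sigma>2))"
    then have e1: "l \<sigma>1 = l \<sigma>2" and e2: "l (\<tau> \<sigma>1) = l (\<tau> \<sigma>2)" by simp_all
    show "\<sigma>1 = \<sigma>2"
    proof
      fix p
      show "\<sigma>1 p = \<sigma>2 p"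
      proof (cases "rr p \<le> K")
        case True then show ?thesis using fun_cong[OF e1, of p] by (simp add: l_def)
      next
        case False
        then have "rx (fst p) \<noteq> 0" using K unfolding rr_def by auto
        then have "rx (2*c - fst p) = W - rx (fst p)" by (rule rx_rf)
        then have "rr (rf p) \<le> K" using False unfolding W_def rr_def rf_simp by simp
        then show ?thesis using fun_cong[OF e2, of "rf p"] by (simp add: l_def \<tau>_def rf_rf)
      qed
    qed
  qed

  have img: "(\<lambda>\<sigma>. (l \<sigma>, l (\<tau> \<sigma>))) ` S = {(a, b). a \<in> l ` S \<and> b \<in> l ` S \<and> bd a = bd b}"
  proof (rule set_eqI, rule iffI)
    fix x assume "x \<in> (\<lambda>\<sigma>. (l \<sigma>, l (\<tau> \<sigma>))) ` S"
    then obtain \<sigma> where s: "\<sigma> \<in> S" and x: "x = (l \<sigma>, l (\<tau> \<sigma>))" by blast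
    have "bd (l \<sigma>) = bd (l (\<tau> \<sigma>))"
    proof
      fix p
      show "bd (l \<sigma>) p = bd (l (\<tau> \<sigma>)) p"
        using per_rf[of \<sigma> p] s K unfolding S_iff by (auto simp: bd_def l_def \<tau>_def rr_def)
    qed
    then show "x \<in> {(a, b). a \<in> l ` S \<and> b \<in> l ` S \<and> bd a = bd b}"
      using x s \<tau>S by blast
  next
    fix x assume "x \<in> {(a, b). a \<in> l ` S \<and> b \<in> l ` S \<and> bd a = bd b}"
    then obtain \<sigma>1 \<sigma>2 where s1: "\<sigma>1 \<in> S" and s2: "\<sigma>2 \<in> S" and x: "x = (l \<sigma>1, l \<sigma>2)"
      and bdeq: "bd (l \<sigma>1) = bd (l \<sigma>2)" by blast
    have p1: "per W L \<sigma>1" and p2: "per W L \<sigma>2" and a1: "adm \<sigma>1" and a2: "adm \<sigma>2"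
      using s1 s2 S_iff by blast+
    have agree: "\<sigma>1 p = \<sigma>2 p" if "rr p = 0 \<or> rr p = K" for p
      using fun_cong[OF bdeq, of p] that K by (auto simp: bd_def l_def)
    define \<sigma> where "\<sigma> p = (if rr p \<le> K then \<sigma>1 p else \<sigma>2 (rf p))" for p
    have alt: "\<sigma> p = \<sigma>2 (rf p)" if "\<not> (0 < rr p \<and> rr p < K)" for p
    proof (cases "rr p \<le> K")
      case True
      then have "rr p = 0 \<or> rr p = K" using that rx_bnd[of "fst p"] unfolding rr_def by auto
      then show ?thesis using True agree per_rf[OF p2, of p] unfolding \<sigma>_def rr_def by simp
    next
      case False then show ?thesis unfolding \<sigma>_def by simp
    qed
    have perS: "per W L \<sigma>"
      unfolding per_def
    proof (intro allI conjI)
      fix a b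
      show "\<sigma> (a + W, b) = \<sigma> (a, b)"
        unfolding \<sigma>_def rr_def rf_simp fst_conv snd_conv rx_W
        using per_x_dvd[OF p2, of "2*c - (a+W)" "2*c - a" b] p1 unfolding per_def by simp
      show "\<sigma> (a, b + L) = \<sigma> (a, b)"
        unfolding \<sigma>_def rr_def rf_simp fst_conv snd_conv
        using p1 p2 unfolding per_def by simp
    qed
    have admS: "adm \<sigma>"
      unfolding adm_def
    proof (intro allI impI)
      fix u v assume h: "\<sigma> u \<and> \<sigma> v \<and> u \<noteq> v"
      show "2 \<le> \<bar>fst u - fst v\<bar> \<or> 2 \<le> \<bar>snd u - snd v\<bar>"
      proof (rule ccontr)
        assume near: "\<not> (2 \<le> \<bar>fst u - fst v\<bar> \<or> 2 \<le> \<bar>snd u - snd v\<bar>)"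
        then have n1: "\<bar>fst v - fst u\<bar> \<le> 1" "\<bar>fst u - fst v\<bar> \<le> 1" by auto
        have case1: False if "rr u \<le> K" "rr v \<le> K"
        proof -
          have "\<sigma>1 u" "\<sigma>1 v" using h that unfolding \<sigma>_def by auto
          then show False using a1 h near unfolding adm_def by blast
        qed
        have case2: False if "\<not> (0 < rr u \<and> rr u < K)" "\<not> (0 < rr v \<and> rr v < K)"
        proof -
          have "\<sigma>2 (rf u)" "\<sigma>2 (rf v)" using h alt that by auto
          then have "2 \<le> \<bar>fst (rf u) - fst (rf v)\<bar> \<or> 2 \<le> \<bar>snd (rf u) - snd (rf v)\<bar>"
            using a2 h rf_neq unfolding adm_def by blast
          then show False using near by (simp add: rf_dist)
        qed
        show False
        proof (cases "0 < rr u \<and> rr u < K")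
          case True
          then have "rr v \<le> K" using rx_near[OF _ _ n1(1)] unfolding rr_def by blast
          then show False using case1 True by simp
        next
          case nu: False
          show False
          proof (cases "0 < rr v \<and> rr v < K")
            case True
            then have "rr u \<le> K" using rx_near[OF _ _ n1(2)] unfolding rr_def by blast
            then show False using case1 True by simp
          next
            case False then show False using case2 nu by simp
          qed
        qed
      qed
    qed
    have \<sigma>S: "\<sigma> \<in> S" using admS perS S_iff by blast
    have l1: "l \<sigma> = l \<sigma>1" unfolding l_def \<sigma>_def by auto
    have l2: "l (\<tau> \<sigma>) = l \<sigma>2"
    proof
      fix p
      show "l (\<tau> \<sigma>) p = l \<sigma>2 p"
      proof (cases "rr p \<le> K")
        case False then show ?thesis unfolding l_def by simp
      next
        case True
        show ?thesis
        proof (cases "rr p = 0 \<or> rr p = K")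
          case True2: True
          have "rr (rf p) = rr p" using rx_rf0 True2 unfolding rr_def rf_simp by simp
          then have "\<sigma> (rf p) = \<sigma>1 (rf p)" using True unfolding \<sigma>_def by simp
          also have "\<dots> = \<sigma>1 p" using per_rf[OF p1, of p] True2 unfolding rr_def by simp
          also have "\<dots> = \<sigma>2 p" using agree True2 by simp
          finally show ?thesis using True unfolding l_def \<tau>_def by simp
        next
          case False
          then have "rx (fst p) \<noteq> 0" unfolding rr_def by simp
          then have "rx (2*c - fst p) = W - rx (fst p)" by (rule rx_rf)
          then have "\<not> rr (rf p) \<le> K" using True False rx_bnd[of "fst p"]
            unfolding rr_def rf_simp W_def by auto
          then have "\<sigma> (rf p) = \<sigma>2 p" unfolding \<sigma>_def by (simp add: rf_rf)
          then show ?thesis using True unfolding l_def \<tau>_def by simp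
        qed
      qed
    qed
    show "x \<in> (\<lambda>\<sigma>. (l \<sigma>, l (\<tau> \<sigma>))) ` S"
      using x l1 l2 \<sigma>S by (metis (no_types, lifting) image_eqI)
  qed

  have finbox: "finite {p. box p}"
  proof -
    have "{p. box p} = {0..<W} \<times> {0..<L}" unfolding box_def by auto
    then show ?thesis by simp
  qed
  define \<phi> :: "int\<times>int \<Rightarrow> int\<times>int" where "\<phi> p = ((2*c - fst p - 1) mod W, snd p)" for p
  have rr_phi: "rr (\<phi> p) = W - 1 - rr p" for p
  proof -
    let ?a = "fst p"
    have "rx ((2*c - ?a - 1) mod W) = W - 1 - rx ?a"
    proof (rule mod_eqI[of "W - 1 - rx ?a" W "(2*c - ?a - 1) mod W - x0", folded rx_def])
      show "0 \<le> W - 1 - rx ?a" "W - 1 - rx ?a < W" using rx_bnd[of ?a] by simp_all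
      have d1: "W dvd ((2*c - ?a - 1) mod W - (2*c - ?a - 1))"
        by (metis dvd_minus_iff dvd_minus_mod minus_diff_eq)
      show "W dvd (2*c - ?a - 1) mod W - x0 - (W - 1 - rx ?a)"
        by (rule dvd_eq6[OF d1 rx_dvd[of ?a]]) (simp add: W_def c_def)
    qed
    then show ?thesis unfolding rr_def \<phi>_def by simp
  qed
  have phi_phi: "\<phi> (\<phi> p) = p" if "box p" for p
  proof -
    let ?a = "fst p"
    have "(2 * c - (2 * c - ?a - 1) mod W - 1) mod W = ?a"
    proof (rule mod_eqI)
      show "0 \<le> ?a" "?a < W" using that unfolding box_def by simp_all
      have "2 * c - (2 * c - ?a - 1) mod W - 1 - ?a = (2*c - ?a - 1) - (2 * c - ?a - 1) mod W" by simp
      then show "W dvd 2 * c - (2 * c - ?a - 1) mod W - 1 - ?a" by (rule dvd_eq3[OF dvd_minus_mod])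
    qed
    then show ?thesis unfolding \<phi>_def by (cases p) simp
  qed
  have box_phi: "box (\<phi> p)" if "box p" for p
    using that W unfolding box_def \<phi>_def by simp
  have vac_phi: "vac \<sigma> q \<longleftrightarrow> vac (l (\<tau> \<sigma>)) (\<phi> q)" if ps: "per W L \<sigma>" and rq: "rr (\<phi> q) < K" for \<sigma> q
  proof -
    obtain a j where q: "q = (a, j)" by (cases q)
    define i' where "i' = (2*c - a - 1) mod W"
    have phq: "\<phi> q = (i', j)" unfolding \<phi>_def i'_def q by simp
    have ri: "rx i' < K" using rq phq unfolding rr_def by simp
    have ri1: "rx (i' + 1) \<le> K" using rx_succ[OF ri] ri by simp
    have dv: "W dvd ((2*c - a - 1) - i')" unfolding i'_def by simp
    have s1: "\<sigma> (2*c - i', y) = \<sigma> (a + 1, y)" for y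
      by (rule per_x_dvd[OF ps]) (use dv in \<open>simp add: algebra_simps\<close>)
    have s2: "\<sigma> (2*c - (i' + 1), y) = \<sigma> (a, y)" for y
      by (rule per_x_dvd[OF ps]) (use dv in \<open>simp add: algebra_simps\<close>)
    have "l (\<tau> \<sigma>) (i', y) = \<sigma> (a + 1, y)" for y
      using ri s1 unfolding l_def \<tau>_def rr_def rf_simp by simp
    moreover have "l (\<tau> \<sigma>) (i' + 1, y) = \<sigma> (a, y)" for y
      using ri1 s2 unfolding l_def \<tau>_def rr_def rf_simp by simp
    ultimately show ?thesis unfolding vac_def phq by (auto simp: q)
  qed
  have nv: "n_vacant (rect W L 0 0) \<sigma> = VL (l \<sigma>) + VL (l (\<tau> \<sigma>))" if s: "\<sigma> \<in> S" for \<sigma>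
  proof -
    have ps: "per W L \<sigma>" using s S_iff by blast
    define A1 where "A1 = {p. box p \<and> rr p < K \<and> vac \<sigma> p}"
    define A2 where "A2 = {p. box p \<and> \<not> rr p < K \<and> vac \<sigma> p}"
    have "n_vacant (rect W L 0 0) \<sigma> = card {p. box p \<and> vac \<sigma> p}"
      unfolding n_vacant_eq box_def by simp
    also have "{p. box p \<and> vac \<sigma> p} = A1 \<union> A2" unfolding A1_def A2_def by auto
    also have "card (A1 \<union> A2) = card A1 + card A2"
      by (rule card_Un_disjoint) (use finbox in \<open>auto simp: A1_def A2_def intro: finite_subset\<close>)
    also have "card A1 = VL (l \<sigma>)"
    proof -
      have "A1 = {p. box p \<and> rr p < K \<and> vac (l \<sigma>) p}"
        unfolding A1_def
      proof (rule Collect_cong)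
        fix p
        show "(box p \<and> rr p < K \<and> vac \<sigma> p) = (box p \<and> rr p < K \<and> vac (l \<sigma>) p)"
        proof (cases "rr p < K")
          case True
          then have "rx (fst p) < K" "rx (fst p + 1) \<le> K" using rx_succ unfolding rr_def by auto
          then show ?thesis unfolding vac_def l_def rr_def by simp
        qed simp
      qed
      then show ?thesis unfolding VL_def by simp
    qed
    also have "card A2 = VL (l (\<tau> \<sigma>))"
    proof -
      define B where "B = {p. box p \<and> rr p < K \<and> vac (l (\<tau> \<sigma>)) p}"
      have "bij_betw \<phi> A2 B"
      proof (rule bij_betw_byWitness[where f'=\<phi>])
        show "\<forall>a\<in>A2. \<phi> (\<phi> a) = a" unfolding A2_def using phi_phi by auto
        show "\<forall>a\<in>B. \<phi> (\<phi> a) = a" unfolding B_def using phi_phi by auto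
        show "\<phi> ` A2 \<subseteq> B"
        proof
          fix y assume "y \<in> \<phi> ` A2"
          then obtain p where p: "p \<in> A2" "y = \<phi> p" by blast
          have "rr (\<phi> p) < K" using p rr_phi[of p] unfolding A2_def W_def by auto
          then show "y \<in> B" using p box_phi vac_phi[OF ps] unfolding A2_def B_def by auto
        qed
        show "\<phi> ` B \<subseteq> A2"
        proof
          fix y assume "y \<in> \<phi> ` B"
          then obtain p where p: "p \<in> B" "y = \<phi> p" by blast
          have bp: "box p" using p unfolding B_def by simp
          have "\<not> rr (\<phi> p) < K" using p rr_phi[of p] unfolding B_def W_def by auto
          moreover have "rr (\<phi> (\<phi> p)) < K" using p phi_phi[OF bp] unfolding B_def by simp
          then have "vac \<sigma> (\<phi> p)" using vac_phi[OF ps, of "\<phi> p"] p phi_phi[OF bp] unfolding B_def by simp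
          ultimately show "y \<in> A2" using p box_phi[OF bp] unfolding A2_def by auto
        qed
      qed
      then have "card A2 = card B" by (rule bij_betw_same_card)
      then show ?thesis unfolding VL_def B_def by simp
    qed
    finally show ?thesis .
  qed
  have wt: "weight (rect W L 0 0) lam \<sigma> = lam powr (- (real (VL (l \<sigma>)) / 4)) * lam powr (- (real (VL (l (\<tau> \<sigma>))) / 4))"
    if s: "\<sigma> \<in> S" for \<sigma>
  proof -
    have "weight (rect W L 0 0) lam \<sigma> = lam powr (- (real (VL (l \<sigma>)) / 4) + - (real (VL (l (\<tau> \<sigma>))) / 4))"
      unfolding weight_def nv[OF s] by (rule arg_cong[where f="\<lambda>x. lam powr x"]) (simp add: field_simps)
    then show ?thesis by (simp only: powr_add)
  qed

  have fF: "f \<sigma> = F (l \<sigma>)" if s: "\<sigma> \<in> S" for \<sigma>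
  proof -
    define \<sigma>' where "\<sigma>' = (SOME \<sigma>'. \<sigma>' \<in> S \<and> l \<sigma>' = l \<sigma>)"
    have "\<sigma>' \<in> S \<and> l \<sigma>' = l \<sigma>" unfolding \<sigma>'_def by (rule someI[of _ \<sigma>]) (use s in simp)
    then have s': "\<sigma>' \<in> S" and ll: "l \<sigma>' = l \<sigma>" by auto
    have om: "\<sigma> \<in> Omega" "\<sigma>' \<in> Omega" using s s' unfolding S_def Omega_per_def by auto
    have "f \<sigma> = f \<sigma>'"
    proof (rule loc[unfolded is_local_def, rule_format, OF om])
      fix a b assume "(real_of_int a, real_of_int b) \<in> rect K L x0 y0"
      then have "real_of_int x0 \<le> real_of_int a" "real_of_int a \<le> real_of_int (x0 + K)"
        unfolding rect_def by auto
      then have ab: "x0 \<le> a" "a \<le> x0 + K" by linarith+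
      have "rx a = a - x0" unfolding rx_def by (rule mod_pos_pos_trivial) (use ab K W_def in auto)
      then have "rr (a, b) \<le> K" using ab unfolding rr_def by simp
      then show "\<sigma> (a, b) = \<sigma>' (a, b)" using fun_cong[OF ll, of "(a, b)"] unfolding l_def by simp
    qed
    then show ?thesis unfolding F_def \<sigma>'_def by simp
  qed

  have "(\<Sum>\<sigma>\<in>S. weight (rect W L 0 0) lam \<sigma> * (f \<sigma> * f (\<tau> \<sigma>))) = (\<Sum>\<sigma>\<in>S. G (l \<sigma>) * G (l (\<tau> \<sigma>)))"
  proof (rule sum.cong)
    fix \<sigma> assume s: "\<sigma> \<in> S"
    show "weight (rect W L 0 0) lam \<sigma> * (f \<sigma> * f (\<tau> \<sigma>)) = G (l \<sigma>) * G (l (\<tau> \<sigma>))"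
      unfolding wt[OF s] fF[OF s] fF[OF \<tau>S[OF s]] G_def by (simp add: ac_simps)
  qed simp
  also have "\<dots> \<ge> 0" by (rule rp_abstract[OF fin inj img])
  finally show ?thesis unfolding S_def W_def \<tau>_def rf_def c_def by simp
qed



definition TT :: "config \<Rightarrow> config" where "TT \<sigma> = (\<lambda>p. \<sigma> (snd p, fst p))"

lemma TT_TT [simp]: "TT (TT \<sigma>) = \<sigma>" unfolding TT_def by simp

lemma adm_TT: "adm \<sigma> \<Longrightarrow> adm (TT \<sigma>)"
  unfolding TT_def
proof (unfold adm_def, intro allI impI)
  fix u v assume a: "\<forall>u v. \<sigma> u \<and> \<sigma> v \<and> u \<noteq> v \<longrightarrow> 2 \<le> \<bar>fst u - fst v\<bar> \<or> 2 \<le> \<bar>snd u - snd v\<bar>"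
    and h: "\<sigma> (snd u, fst u) \<and> \<sigma> (snd v, fst v) \<and> u \<noteq> v"
  have "(snd u, fst u) \<noteq> (snd v, fst v)" using h by (auto simp: prod_eq_iff)
  then have "2 \<le> \<bar>snd u - snd v\<bar> \<or> 2 \<le> \<bar>fst u - fst v\<bar>"
    using a[rule_format, of "(snd u, fst u)" "(snd v, fst v)"] h by simp
  then show "2 \<le> \<bar>fst u - fst v\<bar> \<or> 2 \<le> \<bar>snd u - snd v\<bar>" by auto
qed

lemma per_TT: "per W H \<sigma> \<Longrightarrow> per H W (TT \<sigma>)"
  unfolding per_def TT_def by simp

lemma Omega_per_TT: "\<sigma> \<in> Omega_per W H \<Longrightarrow> TT \<sigma> \<in> Omega_per H W"
  using adm_TT per_TT Omega_per_iff by blast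

lemma Omega_per_TT_img: "Omega_per W H = TT ` Omega_per H W"
proof
  show "Omega_per W H \<subseteq> TT ` Omega_per H W"
  proof
    fix \<sigma> assume "\<sigma> \<in> Omega_per W H"
    then have "TT \<sigma> \<in> Omega_per H W" by (rule Omega_per_TT)
    then show "\<sigma> \<in> TT ` Omega_per H W" by (metis TT_TT image_eqI)
  qed
  show "TT ` Omega_per H W \<subseteq> Omega_per W H" using Omega_per_TT by blast
qed

lemma inj_TT: "inj_on TT A"
  by (metis TT_TT inj_onI)

lemma vac_TT: "vac (TT \<sigma>) p \<longleftrightarrow> vac \<sigma> (prod.swap p)"
  unfolding vac_def TT_def by auto

lemma n_vacant_TT: "n_vacant (rect W H 0 0) (TT \<sigma>) = n_vacant (rect H W 0 0) \<sigma>"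
proof -
  define A where "A = {p. (0 \<le> fst p \<and> fst p < W \<and> 0 \<le> snd p \<and> snd p < H) \<and> vac (TT \<sigma>) p}"
  define B where "B = {p. (0 \<le> fst p \<and> fst p < H \<and> 0 \<le> snd p \<and> snd p < W) \<and> vac \<sigma> p}"
  have "bij_betw prod.swap A B"
    by (rule bij_betw_byWitness[where f'=prod.swap]) (auto simp: A_def B_def vac_TT)
  then have "card A = card B" by (rule bij_betw_same_card)
  then show ?thesis unfolding n_vacant_eq A_def B_def .
qed

lemma weight_TT: "weight (rect W H 0 0) lam (TT \<sigma>) = weight (rect H W 0 0) lam \<sigma>"
  unfolding weight_def n_vacant_TT ..

lemma refl_TT: "TT \<sigma> \<circ> reflH c = TT (\<sigma> \<circ> reflV c)"
  unfolding TT_def reflH_def reflV_def o_def by simp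

lemma local_TT:
  assumes "is_local (rect K L x0 y0) f"
  shows "is_local (rect L K y0 x0) (\<lambda>\<sigma>. f (TT \<sigma>))"
  unfolding is_local_def
proof (intro ballI impI)
  fix \<sigma> \<sigma>' assume s: "\<sigma> \<in> Omega" "\<sigma>' \<in> Omega"
    and ag: "\<forall>a b. (real_of_int a, real_of_int b) \<in> rect L K y0 x0 \<longrightarrow> \<sigma> (a, b) = \<sigma>' (a, b)"
  have s': "TT \<sigma> \<in> Omega" "TT \<sigma>' \<in> Omega" using s adm_TT by (simp_all add: Omega_iff)
  show "f (TT \<sigma>) = f (TT \<sigma>')"
  proof (rule assms[unfolded is_local_def, rule_format, OF s'])
    fix a b assume "(real_of_int a, real_of_int b) \<in> rect K L x0 y0"
    then have "(real_of_int b, real_of_int a) \<in> rect L K y0 x0" unfolding rect_def by auto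
    then show "TT \<sigma> (a, b) = TT \<sigma>' (a, b)" using ag unfolding TT_def by simp
  qed
qed

lemma caseB:
  fixes K L x0 y0 :: int and lam :: real and f :: "config \<Rightarrow> real"
  assumes K: "K > 0" and L: "L > 0" and loc: "is_local (rect K L x0 y0) f"
  shows "0 \<le> (\<Sum>\<sigma>\<in>Omega_per K (2*L). weight (rect K (2*L) 0 0) lam \<sigma> * (f \<sigma> * f (\<sigma> \<circ> reflH (y0 + L))))"
proof -
  define g where "g \<sigma> = f (TT \<sigma>)" for \<sigma>
  have lg: "is_local (rect L K y0 x0) g" unfolding g_def by (rule local_TT[OF loc])
  have "(\<Sum>\<sigma>\<in>Omega_per K (2*L). weight (rect K (2*L) 0 0) lam \<sigma> * (f \<sigma> * f (\<sigma> \<circ> reflH (y0 + L))))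
      = (\<Sum>\<sigma>\<in>TT ` Omega_per (2*L) K. weight (rect K (2*L) 0 0) lam \<sigma> * (f \<sigma> * f (\<sigma> \<circ> reflH (y0 + L))))"
    by (simp only: Omega_per_TT_img[of K "2*L"])
  also have "\<dots> = (\<Sum>\<sigma>\<in>Omega_per (2*L) K. weight (rect K (2*L) 0 0) lam (TT \<sigma>) * (f (TT \<sigma>) * f (TT \<sigma> \<circ> reflH (y0 + L))))"
    by (simp add: sum.reindex[OF inj_TT])
  also have "\<dots> = (\<Sum>\<sigma>\<in>Omega_per (2*L) K. weight (rect (2*L) K 0 0) lam \<sigma> * (g \<sigma> * g (\<sigma> \<circ> reflV (y0 + L))))"
    unfolding weight_TT refl_TT g_def ..
  also have "\<dots> \<ge> 0" by (rule caseA[OF L K lg])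
  finally show ?thesis .
qed

theorem lemma3p1:
  fixes K L x0 y0 :: int and lam :: real and f :: "config \<Rightarrow> real"
  assumes "K > 0" and "L > 0" and "lam > 0"
    and "is_local (rect K L x0 y0) f"
  shows "mu_per (2 * K) L 0 0 lam (\<lambda>\<sigma>. f \<sigma> * f (\<sigma> \<circ> reflV (x0 + K))) \<ge> 0 \<and>
         mu_per K (2 * L) 0 0 lam (\<lambda>\<sigma>. f \<sigma> * f (\<sigma> \<circ> reflH (y0 + L))) \<ge> 0"
proof
  have wnn: "0 \<le> weight Lam lam \<sigma>" for Lam \<sigma> unfolding weight_def by simp
  show "mu_per (2 * K) L 0 0 lam (\<lambda>\<sigma>. f \<sigma> * f (\<sigma> \<circ> reflV (x0 + K))) \<ge> 0"
    unfolding mu_per_def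
    by (rule divide_nonneg_nonneg[OF caseA[OF assms(1,2,4)]]) (simp add: sum_nonneg wnn)
  show "mu_per K (2 * L) 0 0 lam (\<lambda>\<sigma>. f \<sigma> * f (\<sigma> \<circ> reflH (y0 + L))) \<ge> 0"
    unfolding mu_per_def
    by (rule divide_nonneg_nonneg[OF caseB[OF assms(1,2,4)]]) (simp add: sum_nonneg wnn)
qed


end
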